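(* Let $\nu>0$ and let $f:[0,1]\to[f(0),f(1)]$ be an orientation-preserving diffeomorphism of class $C^{2+\nu}$. Then there is $C>0$ (depending only on $f$) such that for every $[a,b]\subset[0,1]$ with $\delta=b-a>0$, setting $\tilde f=\mathcal Z_{[a,b]}(f)$, $$d_{C^2}\big(\tilde f,M_{N_{\tilde f}}\big)\le C\,\delta^{1+\nu}.$$
   Context: For a $C^2$ orientation-preserving diffeomorphism $g$ of an interval, its nonlinearity is $n_g=D^2g/Dg=D(\ln Dg)$; for $g$ defined on $[0,1]$, $N_g=\int_0^1 n_g(x)\,dx$. Zoom: for an interval $H$ and a diffeomorphism $g$ on $H$, $\mathcal Z_H(g)=A_1\circ g\circ A_2:[0,1]\to[0,1]$, where $A_2$ is the orientation-preserving affine map sending $[0,1]$ onto $H$ and $A_1$ the orientation-preserving affine map sending $g(H)$ onto $[0,1]$. For $N\in\mathbb R$, $M_N(x)=\dfrac{xe^{-N/2}}{1+x(e^{-N/2}-1)}$ on $[0,1]$. $d_{C^2}(f,g)=\sum_{i=0}^2\sup_{x\in[0,1]}|D^if(x)-D^ig(x)|$. *)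

theory Defs
  imports "HOL-Analysis.Analysis"
begin

definition D01 :: "(real \<Rightarrow> real) \<Rightarrow> real \<Rightarrow> real" where
  "D01 g x = (THE d. (g has_real_derivative d) (at x within {0..1}))"

definition nonlin :: "(real \<Rightarrow> real) \<Rightarrow> real \<Rightarrow> real" where
  "nonlin g x = D01 (D01 g) x / D01 g x"

definition Nint :: "(real \<Rightarrow> real) \<Rightarrow> real" where
  "Nint g = integral {0..1} (nonlin g)"

definition zoom :: "real \<Rightarrow> real \<Rightarrow> (real \<Rightarrow> real) \<Rightarrow> real \<Rightarrow> real" where
  "zoom a b g x = (g (a + (b - a) * x) - g a) / (g b - g a)"

definition MN :: "real \<Rightarrow> real \<Rightarrow> real" where
  "MN N x = x * exp (- N / 2) / (1 + x * (exp (- N / 2) - 1))"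

definition dC2 :: "(real \<Rightarrow> real) \<Rightarrow> (real \<Rightarrow> real) \<Rightarrow> real" where
  "dC2 f g = (\<Sum>i\<le>(2::nat). Sup ((\<lambda>x. \<bar>(D01 ^^ i) f x - (D01 ^^ i) g x\<bar>) ` {0..1}))"

definition C2nu_diffeo :: "real \<Rightarrow> (real \<Rightarrow> real) \<Rightarrow> bool" where
  "C2nu_diffeo \<nu> f \<longleftrightarrow>
     (\<exists>f1 f2. (\<forall>x\<in>{0..1}. (f has_real_derivative f1 x) (at x within {0..1})
                        \<and> (f1 has_real_derivative f2 x) (at x within {0..1})
                        \<and> f1 x > 0)
            \<and> (\<exists>H. \<forall>x\<in>{0..1}. \<forall>y\<in>{0..1}. \<bar>f2 x - f2 y\<bar> \<le> H * \<bar>x - y\<bar> powr \<nu>))"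

end

theory Submission
  imports Defs
begin

lemma D01_eq:
  assumes "x \<in> {0..1::real}" "(g has_real_derivative d) (at x within {0..1})"
  shows "D01 g x = d"
proof -
  have u: "\<And>d'. (g has_real_derivative d') (at x within {0..1}) \<Longrightarrow> d' = d"
    using vector_derivative_unique_within_closed_interval[of 0 1 x g]
    by (metis assms cbox_interval has_real_derivative_iff_has_vector_derivative zero_less_one)
  show ?thesis unfolding D01_def
    apply (rule the_equality) using assms(2) u by blast+
qed

lemma comp_aff:
  assumes "\<forall>y\<in>{0..1}. (F has_real_derivative F' y) (at y within {0..1::real})"
    "0\<le>a" "0<\<delta>" "a+\<delta>\<le>1" "x\<in>{0..1}"
  shows "((\<lambda>x. F (a+\<delta>*x)) has_real_derivative F' (a+\<delta>*x) * \<delta>) (at x within {0..1})"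
proof -
  have sub: "(\<lambda>x. a+\<delta>*x) ` {0..1} \<subseteq> {0..1}"
  proof
    fix y assume "y \<in> (\<lambda>x. a+\<delta>*x) ` {0..1}"
    then obtain t where t: "t\<in>{0..1}" "y = a+\<delta>*t" by auto
    have "\<delta>*t \<le> \<delta>" using t assms by (simp add: mult_left_le)
    moreover have "0 \<le> \<delta>*t" using t assms by simp
    ultimately show "y \<in> {0..1}" using t assms(2,4) by auto
  qed
  have ax: "a+\<delta>*x \<in> {0..1}" using sub assms(5) by blast
  have d1: "(F has_real_derivative F' (a+\<delta>*x)) (at (a+\<delta>*x) within ((\<lambda>x. a+\<delta>*x) ` {0..1}))"
    using assms(1) ax sub by (meson DERIV_subset)
  have d2: "((\<lambda>x. a+\<delta>*x) has_real_derivative \<delta>) (at x within {0..1})"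
    by (auto intro!: derivative_eq_intros)
  show ?thesis using DERIV_image_chain[OF d1 d2] by (simp add: o_def)
qed

lemma int_dev:
  fixes h :: "real \<Rightarrow> real"
  assumes "(h has_integral I) {0..1::real}" "\<forall>x\<in>{0..1}. \<forall>y\<in>{0..1}. \<bar>h x - h y\<bar> \<le> V"
    "x \<in> {0..1}"
  shows "\<bar>h x - I\<bar> \<le> V"
proof -
  have c1: "((\<lambda>y. h x + V) has_integral (h x + V)) {0..1::real}"
    using has_integral_const_real[of "h x + V" 0 1] by simp
  have c2: "((\<lambda>y. h x - V) has_integral (h x - V)) {0..1::real}"
    using has_integral_const_real[of "h x - V" 0 1] by simp
  have "I \<le> h x + V"
  proof (rule has_integral_le[OF assms(1) c1])
    fix y assume "y \<in> {0..1::real}"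
    then have "\<bar>h y - h x\<bar> \<le> V" using assms(2,3) by blast
    then show "h y \<le> h x + V" by linarith
  qed
  moreover have "h x - V \<le> I"
  proof (rule has_integral_le[OF c2 assms(1)])
    fix y assume "y \<in> {0..1::real}"
    then have "\<bar>h y - h x\<bar> \<le> V" using assms(2,3) by blast
    then show "h x - V \<le> h y" by linarith
  qed
  ultimately show ?thesis by auto
qed

lemma hoelder_cont:
  fixes f :: "real \<Rightarrow> real"
  assumes "\<forall>x\<in>S. \<forall>y\<in>S. \<bar>f x - f y\<bar> \<le> H * \<bar>c*x - c*y\<bar> powr \<nu>" "0 < \<nu>"
  shows "continuous_on S f"
  unfolding continuous_on_def
proof
  fix x assume x: "x \<in> S"
  have lim0: "((\<lambda>y. \<bar>H\<bar> * \<bar>c*y - c*x\<bar> powr \<nu>) \<longlongrightarrow> 0) (at x within S)"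
  proof -
    have "((\<lambda>y. \<bar>c*y - c*x\<bar>) \<longlongrightarrow> 0) (at x within S)"
    proof -
      have "((\<lambda>y. \<bar>c*y - c*x\<bar>) \<longlongrightarrow> \<bar>c*x - c*x\<bar>) (at x within S)"
        by (intro tendsto_intros)
      then show ?thesis by simp
    qed
    then have "((\<lambda>y. \<bar>c*y - c*x\<bar> powr \<nu>) \<longlongrightarrow> 0) (at x within S)"
      by (rule tendsto_zero_powrI) (use assms(2) in auto)
    then show ?thesis using tendsto_mult_right_zero by blast
  qed
  have "((\<lambda>y. f y - f x) \<longlongrightarrow> 0) (at x within S)"
  proof (rule Lim_null_comparison[OF _ lim0])
    show "\<forall>\<^sub>F y in at x within S. norm (f y - f x) \<le> \<bar>H\<bar> * \<bar>c*y - c*x\<bar> powr \<nu>"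
      unfolding eventually_at_filter
    proof (intro always_eventually allI impI)
      fix y assume "y \<noteq> x" "y \<in> S"
      then have "\<bar>f y - f x\<bar> \<le> H * \<bar>c*y - c*x\<bar> powr \<nu>" using assms(1) x by blast
      also have "\<dots> \<le> \<bar>H\<bar> * \<bar>c*y - c*x\<bar> powr \<nu>" by (intro mult_right_mono) auto
      finally show "norm (f y - f x) \<le> \<bar>H\<bar> * \<bar>c*y - c*x\<bar> powr \<nu>" by simp
    qed
  qed
  then show "(f \<longlongrightarrow> f x) (at x within S)"
    using LIM_zero_cancel by blast
qed

lemma den_ge:
  fixes e x :: real
  assumes "0 < e" "x \<in> {0..1}"
  shows "min 1 e \<le> 1 + x*(e-1)" "0 < 1 + x*(e-1)"
proof -
  have "1 + x*(e-1) = (1-x)*1 + x*e" by algebra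
  also have "\<dots> \<ge> (1-x)*min 1 e + x*min 1 e"
    using assms by (intro add_mono mult_left_mono) auto
  finally show "min 1 e \<le> 1 + x*(e-1)" by (simp add: algebra_simps)
  then show "0 < 1 + x*(e-1)" using assms by linarith
qed

lemma mob_d1:
  fixes e x :: real
  assumes "1 + x*(e-1) \<noteq> 0"
  shows "((\<lambda>x. x*e/(1 + x*(e-1))) has_real_derivative e/(1 + x*(e-1))^2) (at x)"
  using assms
  by (auto intro!: derivative_eq_intros simp: field_simps power2_eq_square)

lemma aux2: "(d::real) \<noteq> 0 \<Longrightarrow> - (e * (2 * ((e - 1) * d)) / d ^ 4) = (2 - 2 * e) * e / d ^ 3"
proof -
  assume d: "d \<noteq> 0"
  have "d^4 = d^3 * d" by (simp add: eval_nat_numeral)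
  then show ?thesis using d by (simp add: field_simps)
qed
lemma mob_d2:
  fixes e x :: real
  assumes "1 + x*(e-1) \<noteq> 0"
  shows "((\<lambda>x. e/(1 + x*(e-1))^2) has_real_derivative -2*(e-1)*e/(1 + x*(e-1))^3) (at x)"
  using assms
  by (auto intro!: derivative_eq_intros simp: aux2)

lemma mob_ln:
  fixes e x :: real
  assumes "1 + x*(e-1) > 0"
  shows "((\<lambda>x. -2*ln (1 + x*(e-1))) has_real_derivative -2*(e-1)/(1 + x*(e-1))) (at x)"
  using assms
  by (auto intro!: derivative_eq_intros simp: field_simps)

lemma compare:
  fixes g m G1 G2 M1 M2 :: "real \<Rightarrow> real"
  assumes dg: "\<And>x. x\<in>{0..1} \<Longrightarrow> (g has_real_derivative G1 x) (at x within {0..1})"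
    and dG: "\<And>x. x\<in>{0..1} \<Longrightarrow> (G1 has_real_derivative G2 x) (at x within {0..1})"
    and dm: "\<And>x. x\<in>{0..1} \<Longrightarrow> (m has_real_derivative M1 x) (at x within {0..1})"
    and dM: "\<And>x. x\<in>{0..1} \<Longrightarrow> (M1 has_real_derivative M2 x) (at x within {0..1})"
    and pG: "\<And>x. x\<in>{0..1} \<Longrightarrow> G1 x > 0"
    and pM: "\<And>x. x\<in>{0..1} \<Longrightarrow> M1 x > 0"
    and e0: "g 0 = m 0" and e1: "g 1 = m 1"
    and nl: "\<And>x. x\<in>{0..1} \<Longrightarrow> \<bar>G2 x / G1 x - M2 x / M1 x\<bar> \<le> \<epsilon>"
    and x: "x \<in> {0..1}"
  shows "\<bar>G1 x - M1 x\<bar> \<le> M1 x * (exp \<epsilon> - 1)"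
proof -
  define h where "h = (\<lambda>x. g x - m x)"
  have dh: "\<And>x. x\<in>{0..1} \<Longrightarrow> (h has_real_derivative (G1 x - M1 x)) (at x within {0..1})"
    unfolding h_def using dg dm by (auto intro!: derivative_eq_intros)
  have ch: "continuous_on {0..1} h" by (rule DERIV_continuous_on[OF dh])
  have "\<exists>z. 0 < z \<and> z < 1 \<and> (\<lambda>v. (G1 z - M1 z) * v) = (\<lambda>v. 0)"
  proof (rule Rolle_deriv[of 0 1 h])
    show "h 0 = h 1" unfolding h_def using e0 e1 by simp
    show "continuous_on {0..1} h" by (rule ch)
    fix x :: real assume "0 < x" "x < 1"
    then have "(h has_real_derivative (G1 x - M1 x)) (at x)"
      using dh[of x] at_within_Icc_at[of 0 x 1] by auto
    then show "(h has_derivative (\<lambda>v. (G1 x - M1 x) * v)) (at x)"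
      by (simp add: has_field_derivative_def)
  qed simp
  then obtain z where z: "0 < z" "z < 1" "(\<lambda>v. (G1 z - M1 z) * v) = (\<lambda>v. 0)" by blast
  have "(G1 z - M1 z) * 1 = 0" using fun_cong[OF z(3), of 1] by simp
  then have Gz: "G1 z = M1 z" by simp
  define \<psi> where "\<psi> = (\<lambda>x. ln (G1 x) - ln (M1 x))"
  have d\<psi>: "\<And>x. x\<in>{0..1} \<Longrightarrow> (\<psi> has_real_derivative (G2 x / G1 x - M2 x / M1 x)) (at x within {0..1})"
    unfolding \<psi>_def using dG dM pG pM
    by (auto intro!: derivative_eq_intros)
  have zz: "z \<in> {0..1}" using z by auto
  have "norm (\<psi> x - \<psi> z) \<le> \<epsilon> * norm (x - z)"
    by (rule field_differentiable_bound[OF convex_real_interval(5) d\<psi>]) (use nl x zz in auto)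
  moreover have "norm (x - z) \<le> 1" using x zz by auto
  moreover have "\<epsilon> \<ge> 0" using nl[OF x] by linarith
  moreover have "\<psi> z = 0" unfolding \<psi>_def using Gz by simp
  ultimately have ps0: "\<bar>\<psi> x - \<psi> z\<bar> \<le> \<epsilon> * \<bar>x - z\<bar>" "\<bar>x - z\<bar> \<le> 1" "\<epsilon> \<ge> 0" "\<psi> z = 0"
    by auto
  then have ps: "\<bar>\<psi> x\<bar> \<le> \<epsilon>"
    by (smt (verit) mult_left_le)
  have G: "G1 x = M1 x * exp (\<psi> x)"
    unfolding \<psi>_def using pG[OF x] pM[OF x] by (simp add: exp_diff)
  have "\<bar>exp (\<psi> x) - 1\<bar> \<le> exp \<epsilon> - 1"
  proof -
    have "exp (\<psi> x) \<le> exp \<epsilon>" using ps by simp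
    moreover have "exp (-\<epsilon>) \<le> exp (\<psi> x)" using ps by simp
    moreover have "1 - exp (-\<epsilon>) \<le> exp \<epsilon> - 1"
    proof -
      have "exp \<epsilon> * exp (-\<epsilon>) = 1" by (simp add: exp_minus)
      moreover have "exp (-\<epsilon>) \<le> 1" "1 \<le> exp \<epsilon>" using \<open>\<epsilon>\<ge>0\<close> by auto
      moreover have "(exp \<epsilon> - 1) * (1 - exp (-\<epsilon>)) \<ge> 0"
        using calculation by (intro mult_nonneg_nonneg) auto
      moreover have "(exp \<epsilon> - 1) * (1 - exp (-\<epsilon>)) = exp \<epsilon> + exp (-\<epsilon>) - 1 - exp \<epsilon> * exp (-\<epsilon>)"
        by algebra
      ultimately show ?thesis by linarith
    qed
    ultimately show ?thesis by linarith
  qed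
  then have "M1 x * \<bar>exp (\<psi> x) - 1\<bar> \<le> M1 x * (exp \<epsilon> - 1)"
    using pM[OF x] by (intro mult_left_mono) auto
  moreover have "G1 x - M1 x = M1 x * (exp (\<psi> x) - 1)" using G by (simp add: algebra_simps)
  moreover have "\<bar>M1 x * (exp (\<psi> x) - 1)\<bar> = M1 x * \<bar>exp (\<psi> x) - 1\<bar>"
    using pM[OF x] by (simp add: abs_mult)
  ultimately show ?thesis by simp
qed

lemma exp_m1:
  fixes t :: real
  shows "\<bar>exp t - 1\<bar> \<le> \<bar>t\<bar> * exp \<bar>t\<bar>"
proof (cases "t \<ge> 0")
  case True
  have "exp (-t) \<ge> 1 - t" using exp_ge_add_one_self[of "-t"] by simp
  then have "exp t * (1 - t) \<le> exp t * exp (-t)" by (intro mult_left_mono) auto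
  then have "exp t - t * exp t \<le> 1" by (simp add: exp_minus algebra_simps)
  moreover have "exp t \<ge> 1" using True by simp
  ultimately show ?thesis using True by (simp add: algebra_simps)
next
  case False
  have "exp t \<ge> 1 + t" using exp_ge_add_one_self[of t] by simp
  moreover have "exp t \<le> 1" using False by simp
  moreover have "exp \<bar>t\<bar> \<ge> 1" by simp
  moreover have "-t \<ge> 0" using False by simp
  ultimately have "\<bar>exp t - 1\<bar> \<le> -t"
    using abs_of_nonpos[of "exp t - 1"] by linarith
  also have "-t \<le> \<bar>t\<bar> * exp \<bar>t\<bar>" using \<open>exp \<bar>t\<bar> \<ge> 1\<close> False
    by (simp add: mult_le_cancel_left1)
  finally show ?thesis .
qed

lemma aff_in:
  fixes a \<delta> x :: real
  assumes "0\<le>a" "0<\<delta>" "a+\<delta>\<le>1" "x\<in>{0..1}"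
  shows "a + \<delta>*x \<in> {0..1}"
proof -
  have "\<delta>*x \<le> \<delta>" using assms by (simp add: mult_left_le)
  moreover have "0 \<le> \<delta>*x" using assms by simp
  ultimately show ?thesis using assms(1,3) by auto
qed

lemma aux3: "(d::real) \<noteq> 0 \<Longrightarrow> e \<noteq> 0 \<Longrightarrow> (-2*(e-1)*e/d^3)/(e/d^2) = -2*(e-1)/d"
proof -
  assume "d \<noteq> 0" "e \<noteq> 0"
  moreover have "d^3 = d^2 * d" by (simp add: eval_nat_numeral)
  ultimately show ?thesis by (simp add: field_simps)
qed

lemma aux_frac:
  fixes E p q c :: real
  assumes "1/E \<le> p" "1/E \<le> q" "0 < E" "0 \<le> c"
  shows "c/(p*q) \<le> c*E^2"
proof -
  have "0 < 1/E" using assms by simp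
  then have pp: "0 < p" "0 < q" using assms by linarith+
  have "0 < 1/E" using assms by simp
  then have "1/E * (1/E) \<le> p*q" using assms pp by (intro mult_mono) auto
  then have pq: "1/E^2 \<le> p*q" by (simp add: power2_eq_square)
  have "0 < 1/E^2" using assms by simp
  moreover have "0 < p*q*(1/E^2)" using pp assms(3) by simp
  ultimately have "c/(p*q) \<le> c/(1/E^2)" using pq assms(4) by (intro divide_left_mono) auto
  then show ?thesis by simp
qed

lemma aux_frac1:
  fixes E p c :: real
  assumes "1/E \<le> p" "0 < E" "0 \<le> c"
  shows "c/p \<le> c*E"
proof -
  have "0 < 1/E" using assms by simp
  then have "0 < p" using assms by linarith
  then have "0 < p * (1/E)" using assms by simp
  then have "c/p \<le> c/(1/E)" using assms by (intro divide_left_mono) auto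
  then show ?thesis by simp
qed

lemma sum3: "(\<Sum>i\<le>(2::nat). F i) = F 0 + F 1 + (F 2 :: real)"
  by (simp add: numeral_2_eq_2 atMost_Suc)

lemma funpow2: "(D01 ^^ 2) h = D01 (D01 h)"
  by (simp add: numeral_2_eq_2)

lemma main_est:
  fixes f f1 f2 :: "real \<Rightarrow> real"
  assumes df: "\<forall>y\<in>{0..1}. (f has_real_derivative f1 y) (at y within {0..1})"
    and df1: "\<forall>y\<in>{0..1}. (f1 has_real_derivative f2 y) (at y within {0..1})"
    and m1: "0 < m1" "\<forall>y\<in>{0..1}. m1 \<le> f1 y"
    and B2: "\<forall>y\<in>{0..1}. \<bar>f2 y\<bar> \<le> B2"
    and Hn: "0 \<le> Hn" "\<forall>s\<in>{0..1}. \<forall>t\<in>{0..1}. \<bar>f2 s / f1 s - f2 t / f1 t\<bar> \<le> Hn * \<bar>s - t\<bar> powr \<nu>"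
    and nu: "0 < \<nu>" "\<nu> \<le> 1"
    and ab: "0 \<le> a" "a < b" "b \<le> 1"
    and K1: "K1 = B2/m1 + Hn" and E: "E = exp (K1/2)" and Ke: "Ke = Hn + K1^2*E^4/2"
    and C1: "C1 = E^3*Ke*exp Ke"
  shows "dC2 (zoom a b f) (MN (Nint (zoom a b f))) \<le> (2*C1 + Ke*(E^3+C1) + K1*E^2*C1) * (b-a) powr (1+\<nu>)"
proof -
  define \<delta> where "\<delta> = b - a"
  have d0: "0 < \<delta>" and d1: "\<delta> \<le> 1" and ad: "a + \<delta> \<le> 1" and bd: "b = a + \<delta>"
    using ab unfolding \<delta>_def by auto
  have inI: "\<And>x. x \<in> {0..1} \<Longrightarrow> a + \<delta>*x \<in> {0..1}" using aff_in[OF ab(1) d0 ad] by blast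
  have B2nn: "0 \<le> B2" using B2 by fastforce
  define P where "P = \<delta> powr (1+\<nu>)"
  have P: "P = \<delta> * \<delta> powr \<nu>" unfolding P_def using d0 by (simp add: powr_add)
  have P0: "0 \<le> P" unfolding P_def by simp
  have P1: "P \<le> \<delta>" unfolding P_def using powr_mono'[of 1 "1+\<nu>" \<delta>] d0 d1 nu by simp
  have P2: "\<delta>^2 \<le> P" unfolding P_def using powr_mono'[of "1+\<nu>" 2 \<delta>] d0 d1 nu
    by (simp add: powr_realpow)
  have contf: "continuous_on {0..1} f" using DERIV_continuous_on df by blast
  have f1pos: "\<And>y. y \<in> {0..1} \<Longrightarrow> f1 y > 0" using m1 by force
  have Lpos: "f a < f b"
  proof (rule DERIV_pos_imp_increasing_open[OF ab(2)])
    fix x assume "a < x" "x < b"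
    then have x: "0 < x" "x < 1" "x \<in> {0..1}" using ab by auto
    have "(f has_real_derivative f1 x) (at x within {0..1})" using df x by auto
    then have "DERIV f x :> f1 x" using at_within_Icc_at[of 0 x 1] x by simp
    then show "\<exists>y. DERIV f x :> y \<and> y > 0" using f1pos[OF x(3)] by blast
  next
    show "continuous_on {a..b} f" using contf by (rule continuous_on_subset) (use ab in auto)
  qed
  define L where "L = f b - f a"
  have L0: "0 < L" using Lpos unfolding L_def by simp
  define g where "g = zoom a b f"
  have g_eq: "g = (\<lambda>x. (f (a + \<delta>*x) - f a) / L)"
    unfolding g_def zoom_def L_def \<delta>_def by simp
  define G1 where "G1 = (\<lambda>x. f1 (a + \<delta>*x) * \<delta> / L)"
  define G2 where "G2 = (\<lambda>x. f2 (a + \<delta>*x) * \<delta> * \<delta> / L)"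
  have dg: "\<And>x. x \<in> {0..1} \<Longrightarrow> (g has_real_derivative G1 x) (at x within {0..1})"
  proof -
    fix x :: real assume x: "x \<in> {0..1}"
    have "((\<lambda>x. f (a+\<delta>*x)) has_real_derivative f1 (a+\<delta>*x) * \<delta>) (at x within {0..1})"
      by (rule comp_aff[OF df ab(1) d0 ad x])
    from DERIV_cdivide[OF DERIV_diff[OF this DERIV_const[where k="f a"]], where c=L]
    show "(g has_real_derivative G1 x) (at x within {0..1})"
      unfolding g_eq G1_def by simp
  qed
  have dG1: "\<And>x. x \<in> {0..1} \<Longrightarrow> (G1 has_real_derivative G2 x) (at x within {0..1})"
  proof -
    fix x :: real assume x: "x \<in> {0..1}"
    have "((\<lambda>x. f1 (a+\<delta>*x)) has_real_derivative f2 (a+\<delta>*x) * \<delta>) (at x within {0..1})"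
      by (rule comp_aff[OF df1 ab(1) d0 ad x])
    from DERIV_cdivide[OF DERIV_cmult_right[OF this, where c=\<delta>], where c=L]
    show "(G1 has_real_derivative G2 x) (at x within {0..1})"
      unfolding G1_def G2_def by simp
  qed
  have G1pos: "\<And>x. x \<in> {0..1} \<Longrightarrow> G1 x > 0"
    unfolding G1_def using f1pos inI d0 L0 by simp
  have Dg: "\<And>x. x \<in> {0..1} \<Longrightarrow> D01 g x = G1 x" using D01_eq dg by blast
  have dDg: "\<And>x. x \<in> {0..1} \<Longrightarrow> (D01 g has_real_derivative G2 x) (at x within {0..1})"
  proof -
    fix x :: real assume x: "x \<in> {0..1}"
    show "(D01 g has_real_derivative G2 x) (at x within {0..1})"
      by (rule has_field_derivative_transform_within[OF dG1[OF x] zero_less_one x]) (simp add: Dg)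
  qed
  have DDg: "\<And>x. x \<in> {0..1} \<Longrightarrow> D01 (D01 g) x = G2 x" using D01_eq dDg by blast
  define ng where "ng = (\<lambda>x. \<delta> * (f2 (a+\<delta>*x) / f1 (a+\<delta>*x)))"
  have nl_g: "\<And>x. x \<in> {0..1} \<Longrightarrow> nonlin g x = ng x"
  proof -
    fix x :: real assume x: "x \<in> {0..1}"
    have "f1 (a+\<delta>*x) > 0" using f1pos inI x by blast
    then show "nonlin g x = ng x" unfolding nonlin_def Dg[OF x] DDg[OF x] G1_def G2_def ng_def
      using L0 d0 by (simp add: field_simps)
  qed
  have ng_G: "\<And>x. x \<in> {0..1} \<Longrightarrow> ng x = G2 x / G1 x"
    using nl_g unfolding nonlin_def using Dg DDg by simp
  have ng_hol: "\<And>x y. x \<in> {0..1} \<Longrightarrow> y \<in> {0..1} \<Longrightarrow>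
      \<bar>ng x - ng y\<bar> \<le> (\<delta>*Hn) * \<bar>\<delta>*x - \<delta>*y\<bar> powr \<nu>"
  proof -
    fix x y :: real assume x: "x \<in> {0..1}" and y: "y \<in> {0..1}"
    have "ng x - ng y = \<delta> * (f2 (a+\<delta>*x) / f1 (a+\<delta>*x) - f2 (a+\<delta>*y) / f1 (a+\<delta>*y))"
      unfolding ng_def by (simp only: right_diff_distrib)
    then have "\<bar>ng x - ng y\<bar> = \<delta> * \<bar>f2 (a+\<delta>*x) / f1 (a+\<delta>*x) - f2 (a+\<delta>*y) / f1 (a+\<delta>*y)\<bar>"
      using d0 by (simp add: abs_mult)
    also have "\<dots> \<le> \<delta> * (Hn * \<bar>(a+\<delta>*x) - (a+\<delta>*y)\<bar> powr \<nu>)"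
    proof -
      have "\<bar>f2 (a+\<delta>*x) / f1 (a+\<delta>*x) - f2 (a+\<delta>*y) / f1 (a+\<delta>*y)\<bar> \<le> Hn * \<bar>(a+\<delta>*x) - (a+\<delta>*y)\<bar> powr \<nu>"
        using Hn(2) inI[OF x] inI[OF y] by blast
      then show ?thesis using d0 by (intro mult_left_mono) auto
    qed
    finally show "\<bar>ng x - ng y\<bar> \<le> (\<delta>*Hn) * \<bar>\<delta>*x - \<delta>*y\<bar> powr \<nu>" by simp
  qed
  have ng_var: "\<And>x y. x \<in> {0..1} \<Longrightarrow> y \<in> {0..1} \<Longrightarrow> \<bar>ng x - ng y\<bar> \<le> Hn * P"
  proof -
    fix x y :: real assume x: "x \<in> {0..1}" and y: "y \<in> {0..1}"
    have "\<bar>\<delta>*x - \<delta>*y\<bar> = \<delta> * \<bar>x - y\<bar>" using d0 by (simp add: abs_mult right_diff_distrib[symmetric])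
    also have "\<dots> \<le> \<delta>" using x y d0 by (simp add: mult_left_le abs_le_iff)
    finally have "\<bar>\<delta>*x - \<delta>*y\<bar> powr \<nu> \<le> \<delta> powr \<nu>" using nu by (intro powr_mono2) auto
    then have "(\<delta>*Hn) * \<bar>\<delta>*x - \<delta>*y\<bar> powr \<nu> \<le> (\<delta>*Hn) * \<delta> powr \<nu>"
      using d0 Hn(1) by (intro mult_left_mono) auto
    then show "\<bar>ng x - ng y\<bar> \<le> Hn * P" using ng_hol[OF x y] unfolding P by (simp add: ac_simps)
  qed
  have cont_ng: "continuous_on {0..1} ng"
    by (rule hoelder_cont[where H="\<delta>*Hn" and c=\<delta> and \<nu>=\<nu>]) (use ng_hol nu in auto)
  have cont_nl: "continuous_on {0..1} (nonlin g)"
    using cont_ng by (rule continuous_on_cong[THEN iffD1, rotated 2]) (auto simp: nl_g)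
  define N where "N = Nint g"
  have intg: "(nonlin g has_integral N) {0..1}"
    unfolding N_def Nint_def using integrable_continuous_interval[OF cont_nl] by (simp add: has_integral_integral)
  have intng: "(ng has_integral N) {0..1}"
    using has_integral_eq[OF _ intg, of ng] nl_g by blast
  have ng_N: "\<And>x. x \<in> {0..1} \<Longrightarrow> \<bar>ng x - N\<bar> \<le> Hn * P"
    using int_dev[OF intng] ng_var by blast
  have ng_bd: "\<And>x. x \<in> {0..1} \<Longrightarrow> \<bar>ng x\<bar> \<le> \<delta> * (B2/m1)"
  proof -
    fix x :: real assume x: "x \<in> {0..1}"
    have f1p: "f1 (a+\<delta>*x) \<ge> m1" using m1 inI[OF x] by blast
    have "\<bar>f2 (a+\<delta>*x) / f1 (a+\<delta>*x)\<bar> = \<bar>f2 (a+\<delta>*x)\<bar> / f1 (a+\<delta>*x)" using f1p m1 by simp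
    also have "\<dots> \<le> B2 / m1" using B2 inI[OF x] f1p m1 B2nn
      by (intro frac_le) auto
    finally have h: "\<bar>f2 (a+\<delta>*x) / f1 (a+\<delta>*x)\<bar> \<le> B2 / m1" .
    have "\<bar>ng x\<bar> = \<delta> * \<bar>f2 (a+\<delta>*x) / f1 (a+\<delta>*x)\<bar>"
      by (simp only: ng_def abs_mult abs_of_pos[OF d0])
    then show "\<bar>ng x\<bar> \<le> \<delta> * (B2/m1)" using mult_left_mono[OF h, of \<delta>] d0 by linarith
  qed
  have Nbd: "\<bar>N\<bar> \<le> K1 * \<delta>"
  proof -
    have "\<bar>N\<bar> \<le> \<bar>ng 0\<bar> + \<bar>ng 0 - N\<bar>" by linarith
    also have "\<dots> \<le> \<delta> * (B2/m1) + Hn * \<delta>"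
      using ng_bd[of 0] ng_N[of 0] P1 Hn(1) mult_left_mono[OF P1 Hn(1)] by simp
    finally show ?thesis unfolding K1 by (simp add: algebra_simps)
  qed
  have K1nn: "0 \<le> K1" unfolding K1 using B2nn m1 Hn by simp
  have Nbd1: "\<bar>N\<bar> \<le> K1" using Nbd K1nn d1 mult_left_le by (metis order_trans mult.commute)
  define e where "e = exp (-N/2)"
  have e0: "0 < e" unfolding e_def by simp
  have Epos: "0 < E" unfolding E by simp
  have E1: "1 \<le> E" unfolding E using K1nn by simp
  have eE: "e \<le> E" unfolding e_def E using Nbd1 by simp
  have iE: "1/E = exp (-K1/2)" unfolding E by (simp add: exp_minus field_simps)
  have eL: "1/E \<le> e" unfolding iE e_def using Nbd1 by simp
  have iE1: "1/E \<le> 1" using E1 by simp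
  have den: "\<And>x. x \<in> {0..1} \<Longrightarrow> 1/E \<le> 1 + x*(e-1)"
    using den_ge(1)[OF e0] eL iE1 by (meson min.boundedI order_trans)
  have denp: "\<And>x. x \<in> {0..1} \<Longrightarrow> 0 < 1 + x*(e-1)"
    using den_ge(2)[OF e0] by blast
  have wbd: "\<bar>e-1\<bar> \<le> K1*\<delta>/2*E"
  proof -
    have "\<bar>e-1\<bar> \<le> \<bar>-N/2\<bar> * exp \<bar>-N/2\<bar>" unfolding e_def by (rule exp_m1)
    also have "\<dots> \<le> (K1*\<delta>/2) * E"
      using Nbd Nbd1 unfolding E by (intro mult_mono) auto
    finally show ?thesis by simp
  qed
  have wbd1: "\<bar>e-1\<bar> \<le> K1*E/2"
  proof -
    have "K1*\<delta>/2*E \<le> K1*1/2*E" using K1nn Epos d1 by (intro mult_right_mono divide_right_mono mult_left_mono) auto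
    then show ?thesis using wbd by simp
  qed
  define M1 where "M1 = (\<lambda>x. e/(1 + x*(e-1))^2)"
  define M2 where "M2 = (\<lambda>x. -2*(e-1)*e/(1 + x*(e-1))^3)"
  have MN_eq: "MN N = (\<lambda>x. x*e/(1 + x*(e-1)))" unfolding MN_def e_def by (simp add: fun_eq_iff)
  have dM: "\<And>x. x \<in> {0..1} \<Longrightarrow> (MN N has_real_derivative M1 x) (at x within {0..1})"
    unfolding MN_eq M1_def using mob_d1 denp by (metis has_field_derivative_at_within less_irrefl)
  have dM1: "\<And>x. x \<in> {0..1} \<Longrightarrow> (M1 has_real_derivative M2 x) (at x within {0..1})"
    unfolding M2_def M1_def using mob_d2 denp by (metis has_field_derivative_at_within less_irrefl)
  have M1pos: "\<And>x. x \<in> {0..1} \<Longrightarrow> M1 x > 0"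
  proof -
    fix x :: real assume x: "x \<in> {0..1}"
    have "0 < (1 + x*(e-1))^2" using denp[OF x] by simp
    then show "M1 x > 0" unfolding M1_def using e0 by simp
  qed
  have DM: "\<And>x. x \<in> {0..1} \<Longrightarrow> D01 (MN N) x = M1 x" using D01_eq dM by blast
  have dDM: "\<And>x. x \<in> {0..1} \<Longrightarrow> (D01 (MN N) has_real_derivative M2 x) (at x within {0..1})"
  proof -
    fix x :: real assume x: "x \<in> {0..1}"
    show "(D01 (MN N) has_real_derivative M2 x) (at x within {0..1})"
      by (rule has_field_derivative_transform_within[OF dM1[OF x] zero_less_one x]) (simp add: DM)
  qed
  have DDM: "\<And>x. x \<in> {0..1} \<Longrightarrow> D01 (D01 (MN N)) x = M2 x" using D01_eq dDM by blast
  define nM where "nM = (\<lambda>x. -2*(e-1)/(1 + x*(e-1)))"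
  have nM_eq: "\<And>x. x \<in> {0..1} \<Longrightarrow> M2 x / M1 x = nM x"
    unfolding M1_def M2_def nM_def using aux3 denp e0 by (metis less_irrefl)
  have intM: "(nM has_integral N) {0..1}"
  proof -
    have "(nM has_integral ((\<lambda>x. -2*ln(1+x*(e-1))) 1 - (\<lambda>x. -2*ln(1+x*(e-1))) 0)) {0..1}"
    proof (rule fundamental_theorem_of_calculus)
      fix x :: real assume x: "x \<in> {0..1}"
      have "((\<lambda>x. -2*ln(1+x*(e-1))) has_real_derivative nM x) (at x)"
        unfolding nM_def using mob_ln denp[OF x] by blast
      then show "((\<lambda>x. -2*ln(1+x*(e-1))) has_vector_derivative nM x) (at x within {0..1})"
        by (simp add: has_real_derivative_iff_has_vector_derivative[symmetric] has_field_derivative_at_within)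
    qed simp
    moreover have "(\<lambda>x. -2*ln(1+x*(e-1))) 1 - (\<lambda>x. -2*ln(1+x*(e-1))) 0 = N"
      unfolding e_def by simp
    ultimately show ?thesis by simp
  qed
  have nM_var: "\<And>x y. x \<in> {0..1} \<Longrightarrow> y \<in> {0..1} \<Longrightarrow> \<bar>nM x - nM y\<bar> \<le> K1^2*E^4/2 * P"
  proof -
    fix x y :: real assume x: "x \<in> {0..1}" and y: "y \<in> {0..1}"
    have dx: "0 < 1 + x*(e-1)" and dy: "0 < 1 + y*(e-1)" using denp x y by auto
    have "nM x - nM y = 2*(e-1)^2*(x-y)/((1 + x*(e-1))*(1 + y*(e-1)))"
      unfolding nM_def using dx dy by (simp add: field_simps power2_eq_square)
    then have "\<bar>nM x - nM y\<bar> = (2*(e-1)^2*\<bar>x-y\<bar>)/((1 + x*(e-1))*(1 + y*(e-1)))"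
      using dx dy by (simp add: abs_mult)
    also have "\<dots> \<le> (2*(e-1)^2*\<bar>x-y\<bar>) * E^2"
      by (rule aux_frac[OF den[OF x] den[OF y] Epos]) simp
    also have "\<dots> \<le> (2*(e-1)^2*1) * E^2"
      using x y by (intro mult_right_mono mult_left_mono) auto
    also have "\<dots> \<le> (2*(K1*\<delta>/2*E)^2) * E^2"
    proof -
      have "(e-1)^2 \<le> (K1*\<delta>/2*E)^2"
        using wbd power_mono[of "\<bar>e-1\<bar>" "K1*\<delta>/2*E" 2] by simp
      then show ?thesis by (intro mult_right_mono) auto
    qed
    also have "\<dots> = K1^2*E^4/2 * \<delta>^2" by (simp add: power_mult_distrib eval_nat_numeral)
    also have "\<dots> \<le> K1^2*E^4/2 * P" using P2 Epos by (intro mult_left_mono) auto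
    finally show "\<bar>nM x - nM y\<bar> \<le> K1^2*E^4/2 * P" .
  qed
  have nM_N: "\<And>x. x \<in> {0..1} \<Longrightarrow> \<bar>nM x - N\<bar> \<le> K1^2*E^4/2 * P"
    using int_dev[OF intM] nM_var by blast
  have Ke0: "0 \<le> Ke" unfolding Ke using Hn(1) by simp
  have nn: "\<And>x. x \<in> {0..1} \<Longrightarrow> \<bar>G2 x / G1 x - M2 x / M1 x\<bar> \<le> Ke * P"
  proof -
    fix x :: real assume x: "x \<in> {0..1}"
    have "\<bar>ng x - nM x\<bar> \<le> Hn * P + K1^2*E^4/2 * P" using ng_N[OF x] nM_N[OF x] by linarith
    then show "\<bar>G2 x / G1 x - M2 x / M1 x\<bar> \<le> Ke * P"
      using ng_G[OF x] nM_eq[OF x] unfolding Ke by (simp add: algebra_simps)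
  qed
  have g0: "g 0 = MN N 0" unfolding g_eq MN_eq by simp
  have g1: "g 1 = MN N 1" unfolding g_eq MN_eq using L0 e0 by (simp add: L_def bd)
  have P1': "P \<le> 1" using P1 d1 by simp
  have M1bd: "\<And>x. x \<in> {0..1} \<Longrightarrow> M1 x \<le> E^3"
  proof -
    fix x :: real assume x: "x \<in> {0..1}"
    have "M1 x = e / ((1 + x*(e-1))*(1 + x*(e-1)))" unfolding M1_def by (simp add: power2_eq_square)
    also have "\<dots> \<le> e * E^2" by (rule aux_frac[OF den[OF x] den[OF x] Epos]) (use e0 in simp)
    also have "\<dots> \<le> E * E^2" using eE Epos by (intro mult_right_mono) auto
    finally show "M1 x \<le> E^3" by (simp add: eval_nat_numeral)
  qed
  have C1nn: "0 \<le> C1" unfolding C1 using Ke0 Epos by simp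
  have G1bd: "\<And>x. x \<in> {0..1} \<Longrightarrow> \<bar>G1 x - M1 x\<bar> \<le> C1 * P"
  proof -
    fix x :: real assume x: "x \<in> {0..1}"
    have "\<bar>G1 x - M1 x\<bar> \<le> M1 x * (exp (Ke*P) - 1)"
      by (rule compare[OF dg dG1 dM dM1 G1pos M1pos g0 g1 nn x])
    also have "\<dots> \<le> E^3 * (exp (Ke*P) - 1)"
      using M1bd[OF x] Ke0 P0 by (intro mult_right_mono) auto
    also have "\<dots> \<le> E^3 * (Ke*P * exp Ke)"
    proof -
      have "exp (Ke*P) - 1 \<le> \<bar>Ke*P\<bar> * exp \<bar>Ke*P\<bar>" using exp_m1[of "Ke*P"] by linarith
      also have "\<dots> \<le> Ke*P * exp Ke"
      proof -
        have "Ke*P \<le> Ke*1" using P1' Ke0 by (intro mult_left_mono) auto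
        moreover have "\<bar>Ke*P\<bar> = Ke*P" using Ke0 P0 by simp
        moreover have "0 \<le> Ke*P" using Ke0 P0 by simp
        ultimately show ?thesis by (simp add: mult_left_mono)
      qed
      finally show ?thesis using Epos by (intro mult_left_mono) auto
    qed
    also have "\<dots> = C1 * P" unfolding C1 by (simp add: ac_simps)
    finally show "\<bar>G1 x - M1 x\<bar> \<le> C1 * P" .
  qed
  have gbd: "\<And>x. x \<in> {0..1} \<Longrightarrow> \<bar>g x - MN N x\<bar> \<le> C1 * P"
  proof -
    fix x :: real assume x: "x \<in> {0..1}"
    have "norm ((\<lambda>x. g x - MN N x) x - (\<lambda>x. g x - MN N x) 0) \<le> (C1*P) * norm (x - 0)"
    proof (rule field_differentiable_bound[OF convex_real_interval(5)])
      fix z :: real assume z: "z \<in> {0..1}"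
      show "((\<lambda>x. g x - MN N x) has_field_derivative (G1 z - M1 z)) (at z within {0..1})"
        using dg[OF z] dM[OF z] by (rule DERIV_diff)
      show "norm (G1 z - M1 z) \<le> C1*P" using G1bd[OF z] by simp
    qed (use x in auto)
    moreover have "norm (x - 0) \<le> 1" using x by auto
    moreover have "0 \<le> C1*P" using C1nn P0 by simp
    ultimately have "\<bar>g x - MN N x - (g 0 - MN N 0)\<bar> \<le> C1*P"
      by (smt (verit) mult_left_le real_norm_def)
    then show "\<bar>g x - MN N x\<bar> \<le> C1 * P" using g0 by simp
  qed
  have G2bd: "\<And>x. x \<in> {0..1} \<Longrightarrow> \<bar>G2 x - M2 x\<bar> \<le> (Ke*(E^3+C1) + K1*E^2*C1) * P"
  proof -
    fix x :: real assume x: "x \<in> {0..1}"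
    have G2e: "G2 x = ng x * G1 x" using ng_G[OF x] G1pos[OF x] by simp
    have M2e: "M2 x = nM x * M1 x" using nM_eq[OF x] M1pos[OF x] by (simp add: field_simps)
    have eq: "G2 x - M2 x = (ng x - nM x) * G1 x + nM x * (G1 x - M1 x)"
      unfolding G2e M2e by (simp add: algebra_simps)
    have a1: "\<bar>ng x - nM x\<bar> \<le> Ke*P" using nn[OF x] ng_G[OF x] nM_eq[OF x] by simp
    have a2: "\<bar>G1 x\<bar> \<le> E^3 + C1"
    proof -
      have "C1*P \<le> C1*1" using P1' C1nn by (intro mult_left_mono) auto
      then show ?thesis using G1bd[OF x] M1bd[OF x] M1pos[OF x] G1pos[OF x] by simp
    qed
    have a3: "\<bar>nM x\<bar> \<le> K1*E^2"
    proof -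
      have "\<bar>nM x\<bar> = \<bar>-2*(e-1)\<bar>/(1 + x*(e-1))"
        unfolding nM_def by (simp only: abs_divide abs_of_pos[OF denp[OF x]])
      also have "\<bar>-2*(e-1)\<bar> = 2*\<bar>e-1\<bar>" by (simp only: abs_mult) 
      finally have "\<bar>nM x\<bar> = (2*\<bar>e-1\<bar>)/(1 + x*(e-1))" .
      also have "\<dots> \<le> (2*\<bar>e-1\<bar>)*E" by (rule aux_frac1[OF den[OF x] Epos]) simp
      also have "\<dots> \<le> (2*(K1*E/2))*E" using wbd1 Epos by (intro mult_right_mono) auto
      finally show ?thesis by (simp add: power2_eq_square)
    qed
    have "\<bar>G2 x - M2 x\<bar> \<le> \<bar>ng x - nM x\<bar> * \<bar>G1 x\<bar> + \<bar>nM x\<bar> * \<bar>G1 x - M1 x\<bar>"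
      unfolding eq by (metis abs_mult abs_triangle_ineq)
    also have "\<dots> \<le> (Ke*P) * (E^3 + C1) + (K1*E^2) * (C1*P)"
      using a1 a2 a3 G1bd[OF x] by (intro add_mono mult_mono) auto
    finally show "\<bar>G2 x - M2 x\<bar> \<le> (Ke*(E^3+C1) + K1*E^2*C1) * P" by (simp add: algebra_simps)
  qed
  have S0: "Sup ((\<lambda>x. \<bar>(D01 ^^ 0) g x - (D01 ^^ 0) (MN N) x\<bar>) ` {0..1}) \<le> C1 * P"
    by (rule cSUP_least) (auto simp: gbd)
  have S1: "Sup ((\<lambda>x. \<bar>(D01 ^^ 1) g x - (D01 ^^ 1) (MN N) x\<bar>) ` {0..1}) \<le> C1 * P"
    by (rule cSUP_least) (auto simp: G1bd Dg DM)
  have S2: "Sup ((\<lambda>x. \<bar>(D01 ^^ 2) g x - (D01 ^^ 2) (MN N) x\<bar>) ` {0..1}) \<le> (Ke*(E^3+C1) + K1*E^2*C1) * P"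
    unfolding funpow2 by (rule cSUP_least) (auto simp: G2bd DDg DDM)
  have "dC2 g (MN N) \<le> C1 * P + C1 * P + (Ke*(E^3+C1) + K1*E^2*C1) * P"
    unfolding dC2_def sum3 using S0 S1 S2 by linarith
  then show ?thesis unfolding g_def[symmetric] N_def[symmetric] P_def[symmetric] \<delta>_def[symmetric]
    by (simp add: algebra_simps)
qed


lemma quot_hold:
  fixes A A' p q m1 Hh B r z :: real
  assumes "m1 \<le> p" "m1 \<le> q" "0 < m1" "\<bar>A - A'\<bar> \<le> Hh*r" "\<bar>q - p\<bar> \<le> B*z" "\<bar>A'\<bar> \<le> B"
    "z \<le> r" "0 \<le> z" "0 \<le> B" "0 \<le> Hh"
  shows "\<bar>A/p - A'/q\<bar> \<le> (Hh/m1 + B*B/m1^2)*r"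
proof -
  have p0: "0 < p" and q0: "0 < q" using assms by linarith+
  have r0: "0 \<le> r" using assms by linarith
  have eq: "A/p - A'/q = (A-A')/p + A'*(q-p)/(p*q)" using p0 q0 by (simp add: field_simps)
  have t1: "\<bar>(A-A')/p\<bar> \<le> Hh*r/m1"
  proof -
    have "\<bar>(A-A')/p\<bar> = \<bar>A-A'\<bar>/p" using p0 by simp
    also have "\<dots> \<le> Hh*r/m1" using assms p0 r0 by (intro frac_le) auto
    finally show ?thesis .
  qed
  have t2: "\<bar>A'*(q-p)/(p*q)\<bar> \<le> B*B*r/m1^2"
  proof -
    have "\<bar>A'*(q-p)/(p*q)\<bar> = \<bar>A'\<bar>*\<bar>q-p\<bar>/(p*q)" using p0 q0 by (simp add: abs_mult)
    also have "\<dots> \<le> (B*(B*r))/(m1*m1)"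
    proof (rule frac_le)
      have "B*z \<le> B*r" using assms by (intro mult_left_mono) auto
      then have "\<bar>q-p\<bar> \<le> B*r" using assms by linarith
      then show "\<bar>A'\<bar>*\<bar>q-p\<bar> \<le> B*(B*r)" using assms by (intro mult_mono) auto
      show "0 \<le> B*(B*r)" using assms r0 by simp
      show "0 < m1*m1" using assms by simp
      show "m1*m1 \<le> p*q" using assms by (intro mult_mono) auto
    qed
    finally show ?thesis by (simp add: power2_eq_square ac_simps)
  qed
  have "\<bar>A/p - A'/q\<bar> \<le> Hh*r/m1 + B*B*r/m1^2" unfolding eq using t1 t2 by linarith
  then show ?thesis by (simp add: algebra_simps)
qed

theorem proposition2p1:
  fixes f :: "real \<Rightarrow> real" and \<nu> :: real
  assumes "0 < \<nu>" and "\<nu> \<le> 1"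
    and "C2nu_diffeo \<nu> f"
  shows "\<exists>C>0. \<forall>a b. 0 \<le> a \<and> a < b \<and> b \<le> 1 \<longrightarrow>
           dC2 (zoom a b f) (MN (Nint (zoom a b f))) \<le> C * (b - a) powr (1 + \<nu>)"
proof -
  obtain f1 f2 H where fd: "\<forall>x\<in>{0..1}. (f has_real_derivative f1 x) (at x within {0..1})
                        \<and> (f1 has_real_derivative f2 x) (at x within {0..1}) \<and> f1 x > 0"
    and hol: "\<forall>x\<in>{0..1}. \<forall>y\<in>{0..1}. \<bar>f2 x - f2 y\<bar> \<le> H * \<bar>x - y\<bar> powr \<nu>"
    using assms(3) unfolding C2nu_diffeo_def by blast
  have df: "\<forall>y\<in>{0..1}. (f has_real_derivative f1 y) (at y within {0..1})" using fd by blast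
  have df1: "\<forall>y\<in>{0..1}. (f1 has_real_derivative f2 y) (at y within {0..1})" using fd by blast
  have cf1: "continuous_on {0..1} f1" using DERIV_continuous_on df1 by blast
  obtain x0 where x0: "x0 \<in> {0..1::real}" "\<forall>y\<in>{0..1}. f1 x0 \<le> f1 y"
    using continuous_attains_inf[OF compact_Icc _ cf1] by force
  define m1 where "m1 = f1 x0"
  have m1: "0 < m1" "\<forall>y\<in>{0..1}. m1 \<le> f1 y" unfolding m1_def using x0 fd by auto
  have hol1: "\<forall>x\<in>{0..1}. \<forall>y\<in>{0..1}. \<bar>f2 x - f2 y\<bar> \<le> H * \<bar>1*x - 1*y\<bar> powr \<nu>" using hol by simp
  have cf2: "continuous_on {0..1} f2" by (rule hoelder_cont[OF hol1 assms(1)])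
  have "bounded (f2 ` {0..1})"
    using compact_continuous_image[OF cf2 compact_Icc] compact_imp_bounded by blast
  then obtain B0 where B0: "\<forall>y\<in>{0..1}. \<bar>f2 y\<bar> \<le> B0" unfolding bounded_real by blast
  define B2 where "B2 = \<bar>B0\<bar>"
  have B2: "\<forall>y\<in>{0..1}. \<bar>f2 y\<bar> \<le> B2" using B0 unfolding B2_def by fastforce
  have B2nn: "0 \<le> B2" unfolding B2_def by simp
  have lip: "\<And>s t. s \<in> {0..1} \<Longrightarrow> t \<in> {0..1} \<Longrightarrow> \<bar>f1 t - f1 s\<bar> \<le> B2 * \<bar>t - s\<bar>"
  proof -
    fix s t :: real assume s: "s \<in> {0..1}" and t: "t \<in> {0..1}"
    have "norm (f1 t - f1 s) \<le> B2 * norm (t - s)"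
      by (rule field_differentiable_bound[OF convex_real_interval(5)]) (use df1 B2 s t in auto)
    then show "\<bar>f1 t - f1 s\<bar> \<le> B2 * \<bar>t - s\<bar>" by simp
  qed
  define Hn where "Hn = \<bar>H\<bar>/m1 + B2*B2/m1^2"
  have Hn0: "0 \<le> Hn" unfolding Hn_def using m1 B2nn by simp
  have Hn: "\<forall>s\<in>{0..1}. \<forall>t\<in>{0..1}. \<bar>f2 s / f1 s - f2 t / f1 t\<bar> \<le> Hn * \<bar>s - t\<bar> powr \<nu>"
  proof (intro ballI)
    fix s t :: real assume s: "s \<in> {0..1}" and t: "t \<in> {0..1}"
    have st1: "\<bar>s - t\<bar> \<le> 1" using s t by auto
    have zr: "\<bar>s - t\<bar> \<le> \<bar>s - t\<bar> powr \<nu>"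
    proof (cases "s = t")
      case True then show ?thesis by simp
    next
      case False
      then have "\<bar>s - t\<bar> powr 1 \<le> \<bar>s - t\<bar> powr \<nu>"
        using powr_mono'[of \<nu> 1 "\<bar>s - t\<bar>"] assms(2) st1 by simp
      then show ?thesis by simp
    qed
    have hh: "\<bar>f2 s - f2 t\<bar> \<le> \<bar>H\<bar> * \<bar>s - t\<bar> powr \<nu>"
    proof -
      have "\<bar>f2 s - f2 t\<bar> \<le> H * \<bar>s - t\<bar> powr \<nu>" using hol s t by blast
      also have "\<dots> \<le> \<bar>H\<bar> * \<bar>s - t\<bar> powr \<nu>" by (intro mult_right_mono) auto
      finally show ?thesis .
    qed
    have "\<bar>f2 s / f1 s - f2 t / f1 t\<bar> \<le> (\<bar>H\<bar>/m1 + B2*B2/m1^2) * \<bar>s - t\<bar> powr \<nu>"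
    proof (rule quot_hold[where z="\<bar>s - t\<bar>"])
      show "\<bar>f1 t - f1 s\<bar> \<le> B2 * \<bar>s - t\<bar>" using lip[OF s t] by (simp add: abs_minus_commute)
    qed (use m1 s t hh B2 B2nn zr in auto)
    then show "\<bar>f2 s / f1 s - f2 t / f1 t\<bar> \<le> Hn * \<bar>s - t\<bar> powr \<nu>" unfolding Hn_def .
  qed
  define K1 where "K1 = B2/m1 + Hn"
  define E where "E = exp (K1/2)"
  define Ke where "Ke = Hn + K1^2*E^4/2"
  define C1 where "C1 = E^3*Ke*exp Ke"
  define Ct where "Ct = 2*C1 + Ke*(E^3+C1) + K1*E^2*C1"
  have K1nn: "0 \<le> K1" unfolding K1_def using B2nn m1 Hn0 by simp
  have Ke0: "0 \<le> Ke" unfolding Ke_def using Hn0 by simp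
  have Epos: "0 < E" unfolding E_def by simp
  have C1nn: "0 \<le> C1" unfolding C1_def using Ke0 Epos by simp
  have Ct0: "0 \<le> Ct" unfolding Ct_def using C1nn Ke0 Epos K1nn by simp
  show ?thesis
  proof (intro exI[of _ "Ct + 1"] conjI allI impI)
    show "0 < Ct + 1" using Ct0 by simp
    fix a b :: real assume ab: "0 \<le> a \<and> a < b \<and> b \<le> 1"
    have "dC2 (zoom a b f) (MN (Nint (zoom a b f))) \<le> Ct * (b - a) powr (1 + \<nu>)"
      unfolding Ct_def
      by (rule main_est[OF df df1 m1 B2 Hn0 Hn assms(1,2) _ _ _ K1_def E_def Ke_def C1_def]) (use ab in auto)
    also have "\<dots> \<le> (Ct + 1) * (b - a) powr (1 + \<nu>)" by (intro mult_right_mono) auto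
    finally show "dC2 (zoom a b f) (MN (Nint (zoom a b f))) \<le> (Ct + 1) * (b - a) powr (1 + \<nu>)" .
  qed
qed

end
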